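(* Let $\mathbf{A}$ be a filtered quantization of $A$ and $S=S(\mathbf{A})$ the set of nondegenerate short star-products on $A$ corresponding to $\mathbf{A}$. Then there is a map $\pi:S\to\mathrm{Aut}(\mathbf{A})$ to the group of filtration-preserving $s$-invariant automorphisms of $\mathbf{A}$ (sending a star-product to its twisting automorphism $g$) whose fiber $\pi^{-1}(g)$ is a subset of the dual space $(HH_0(\mathbf{A},\mathbf{A}g)^s)^*$ of the $s$-invariants in $HH_0(\mathbf{A},\mathbf{A}g)$.
   Context: $A=\bigoplus_{d\ge0}A_d$ commutative graded, $A_0=\mathbb{C}$, $\dim A_d<\infty$, Poisson bracket of degree $-2$; $s=(-1)^d$. Filtered quantization: filtered algebra with $\mathrm{gr}\,\mathbf{A}\cong A$, filtration-preserving involution $s$ with associated graded $(-1)^d$. A star-product $a*b=\sum_kC_k(a,b)$ ($C_k$ of degree $-2k$, $C_0$ = product, $C_1(a,b)-C_1(b,a)=\{a,b\}$) corresponds to $\mathbf{A}$ if $(A,* )$ is identified with $\mathbf{A}$ via a quantization map ($s$-equivariant, filtration-preserving linear iso with $\mathrm{gr}=\mathrm{id}$). Short: $C_k(a,b)=0$ for $k>\min(\deg a,\deg b)$; nondegenerate: $\mathrm{CT}(a*b)$ nondegenerate on each $A_i$. For such a star-product the functional $T=\mathrm{CT}$ on $\mathbf{A}$ satisfies $T(\mathbf{a}\mathbf{b})=T(\mathbf{b}g(\mathbf{a}))$ for a unique filtration-preserving automorphism $g$ commuting with $s$ (the twisting automorphism). $\mathbf{A}g$ is $\mathbf{A}$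 with right action twisted by $g$; $HH_0(\mathbf{A},\mathbf{A}g)=\mathbf{A}/\mathrm{span}\{\mathbf{a}\mathbf{b}-\mathbf{b}g(\mathbf{a})\}$. *)

theory Defs
  imports Complex_Main
begin

text \<open>
  The commutative graded Poisson algebra A is a commutative ring
  (type 'a) with a complex scalar multiplication scA; its grading is the family
  of subspaces Ad d (the homogeneous part A_d); pb is the Poisson bracket.
  The filtered quantization is a ring (type 'b) with complex scalar multiplication
  scB, filtration F d, involution s, and the identification gr = A is given by the
  symbol maps smb d : F_d -> A_d (linear, onto, kernel F_(d-1), multiplicative,
  turning commutators into the Poisson bracket).
\<close>

definition graded_poisson_alg ::
  "(complex \<Rightarrow> 'a::comm_ring_1 \<Rightarrow> 'a) \<Rightarrow> (nat \<Rightarrow> 'a set) \<Rightarrow> ('a \<Rightarrow> 'a \<Rightarrow> 'a) \<Rightarrow> bool" where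
  "graded_poisson_alg scA Ad pb \<longleftrightarrow>
     vector_space scA \<and>
     (\<forall>c x y. scA c (x * y) = scA c x * y) \<and>
     (\<forall>d. module.subspace scA (Ad d)) \<and>
     (\<forall>d. \<exists>B. finite B \<and> B \<subseteq> Ad d \<and> module.span scA B = Ad d) \<and>
     (\<forall>x. \<exists>!f. finite {d. f d \<noteq> 0} \<and> (\<forall>d. f d \<in> Ad d) \<and> x = (\<Sum>d\<in>{d. f d \<noteq> 0}. f d)) \<and>
     (1::'a) \<noteq> 0 \<and>
     Ad 0 = range (\<lambda>c. scA c 1) \<and>
     (\<forall>d e x y. x \<in> Ad d \<longrightarrow> y \<in> Ad e \<longrightarrow> x * y \<in> Ad (d + e)) \<and>
     (\<forall>x y z. pb (x + y) z = pb x z + pb y z) \<and>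
     (\<forall>c x y. pb (scA c x) y = scA c (pb x y)) \<and>
     (\<forall>x y. pb x y = - pb y x) \<and>
     (\<forall>x y z. pb x (y * z) = pb x y * z + y * pb x z) \<and>
     (\<forall>x y z. pb x (pb y z) = pb (pb x y) z + pb y (pb x z)) \<and>
     (\<forall>d e x y. x \<in> Ad d \<longrightarrow> y \<in> Ad e \<longrightarrow>
        pb x y \<in> (if 2 \<le> d + e then Ad (d + e - 2) else {0}))"

definition filtered_quantization ::
  "(complex \<Rightarrow> 'a::comm_ring_1 \<Rightarrow> 'a) \<Rightarrow> (nat \<Rightarrow> 'a set) \<Rightarrow> ('a \<Rightarrow> 'a \<Rightarrow> 'a) \<Rightarrow>
   (complex \<Rightarrow> 'b::ring_1 \<Rightarrow> 'b) \<Rightarrow> (nat \<Rightarrow> 'b set) \<Rightarrow> (nat \<Rightarrow> 'b \<Rightarrow> 'a) \<Rightarrow> ('b \<Rightarrow> 'b) \<Rightarrow> bool" where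
  "filtered_quantization scA Ad pb scB F smb s \<longleftrightarrow>
     vector_space scB \<and>
     (\<forall>c x y. scB c (x * y) = scB c x * y \<and> scB c (x * y) = x * scB c y) \<and>
     (\<forall>d. module.subspace scB (F d)) \<and>
     (\<forall>d. F d \<subseteq> F (Suc d)) \<and> (\<Union>d. F d) = UNIV \<and> 1 \<in> F 0 \<and>
     (\<forall>d e x y. x \<in> F d \<longrightarrow> y \<in> F e \<longrightarrow> x * y \<in> F (d + e)) \<and>
     \<comment> \<open>gr of the quantization is identified with A\<close>
     (\<forall>d x y. x \<in> F d \<longrightarrow> y \<in> F d \<longrightarrow> smb d (x + y) = smb d x + smb d y) \<and>
     (\<forall>d c x. x \<in> F d \<longrightarrow> smb d (scB c x) = scA c (smb d x)) \<and>
     (\<forall>d. smb d ` F d = Ad d) \<and>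
     (\<forall>d x. x \<in> F d \<longrightarrow> (smb d x = 0 \<longleftrightarrow> x \<in> (if d = 0 then {0} else F (d - 1)))) \<and>
     smb 0 1 = 1 \<and>
     (\<forall>d e x y. x \<in> F d \<longrightarrow> y \<in> F e \<longrightarrow> smb (d + e) (x * y) = smb d x * smb e y) \<and>
     (\<forall>d e x y. x \<in> F d \<longrightarrow> y \<in> F e \<longrightarrow>
        x * y - y * x \<in> (if 2 \<le> d + e then F (d + e - 2) else {0}) \<and>
        (2 \<le> d + e \<longrightarrow> smb (d + e - 2) (x * y - y * x) = pb (smb d x) (smb e y))) \<and>
     \<comment> \<open>the involution s\<close>
     (\<forall>x. s (s x) = x) \<and>
     (\<forall>x y. s (x + y) = s x + s y) \<and> (\<forall>c x. s (scB c x) = scB c (s x)) \<and>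
     (\<forall>x y. s (x * y) = s x * s y) \<and> s 1 = 1 \<and>
     (\<forall>d x. x \<in> F d \<longrightarrow> s x \<in> F d \<and> smb d (s x) = scA ((-1) ^ d) (smb d x))"

definition quantization_map ::
  "(complex \<Rightarrow> 'a::comm_ring_1 \<Rightarrow> 'a) \<Rightarrow> (nat \<Rightarrow> 'a set) \<Rightarrow>
   (complex \<Rightarrow> 'b::ring_1 \<Rightarrow> 'b) \<Rightarrow> (nat \<Rightarrow> 'b set) \<Rightarrow> (nat \<Rightarrow> 'b \<Rightarrow> 'a) \<Rightarrow> ('b \<Rightarrow> 'b) \<Rightarrow>
   ('a \<Rightarrow> 'b) \<Rightarrow> bool" where
  "quantization_map scA Ad scB F smb s \<phi> \<longleftrightarrow>
     bij \<phi> \<and>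
     (\<forall>x y. \<phi> (x + y) = \<phi> x + \<phi> y) \<and> (\<forall>c x. \<phi> (scA c x) = scB c (\<phi> x)) \<and>
     (\<forall>d a. a \<in> Ad d \<longrightarrow> \<phi> a \<in> F d \<and> smb d (\<phi> a) = a \<and> s (\<phi> a) = scB ((-1) ^ d) (\<phi> a))"

definition star_of :: "(nat \<Rightarrow> 'a \<Rightarrow> 'a \<Rightarrow> 'a::comm_ring_1) \<Rightarrow> 'a \<Rightarrow> 'a \<Rightarrow> 'a" where
  "star_of C a b = (\<Sum>k\<in>{k. C k a b \<noteq> 0}. C k a b)"

definition star_product ::
  "(complex \<Rightarrow> 'a::comm_ring_1 \<Rightarrow> 'a) \<Rightarrow> (nat \<Rightarrow> 'a set) \<Rightarrow> ('a \<Rightarrow> 'a \<Rightarrow> 'a) \<Rightarrow>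
   (nat \<Rightarrow> 'a \<Rightarrow> 'a \<Rightarrow> 'a) \<Rightarrow> bool" where
  "star_product scA Ad pb C \<longleftrightarrow>
     (\<forall>k x y z. C k (x + y) z = C k x z + C k y z \<and> C k x (y + z) = C k x y + C k x z) \<and>
     (\<forall>k c x y. C k (scA c x) y = scA c (C k x y) \<and> C k x (scA c y) = scA c (C k x y)) \<and>
     (\<forall>k d e a b. a \<in> Ad d \<longrightarrow> b \<in> Ad e \<longrightarrow>
        C k a b \<in> (if 2 * k \<le> d + e then Ad (d + e - 2 * k) else {0})) \<and>
     (\<forall>a b. C 0 a b = a * b) \<and>
     (\<forall>a b. C 1 a b - C 1 b a = pb a b)"

definition corresponds_to ::
  "(complex \<Rightarrow> 'a::comm_ring_1 \<Rightarrow> 'a) \<Rightarrow> (nat \<Rightarrow> 'a set) \<Rightarrow>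
   (complex \<Rightarrow> 'b::ring_1 \<Rightarrow> 'b) \<Rightarrow> (nat \<Rightarrow> 'b set) \<Rightarrow> (nat \<Rightarrow> 'b \<Rightarrow> 'a) \<Rightarrow> ('b \<Rightarrow> 'b) \<Rightarrow>
   (nat \<Rightarrow> 'a \<Rightarrow> 'a \<Rightarrow> 'a) \<Rightarrow> ('a \<Rightarrow> 'b) \<Rightarrow> bool" where
  "corresponds_to scA Ad scB F smb s C \<phi> \<longleftrightarrow>
     quantization_map scA Ad scB F smb s \<phi> \<and> (\<forall>a b. \<phi> (star_of C a b) = \<phi> a * \<phi> b)"

definition short_star :: "(nat \<Rightarrow> 'a set) \<Rightarrow> (nat \<Rightarrow> 'a \<Rightarrow> 'a \<Rightarrow> 'a::comm_ring_1) \<Rightarrow> bool" where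
  "short_star Ad C \<longleftrightarrow>
     (\<forall>k d e a b. a \<in> Ad d \<longrightarrow> b \<in> Ad e \<longrightarrow> min d e < k \<longrightarrow> C k a b = 0)"

definition CT :: "(complex \<Rightarrow> 'a::comm_ring_1 \<Rightarrow> 'a) \<Rightarrow> (nat \<Rightarrow> 'a set) \<Rightarrow> 'a \<Rightarrow> complex" where
  "CT scA Ad a = (THE c. a - scA c 1 \<in> module.span scA (\<Union>d\<in>{1..}. Ad d))"

definition nondegenerate_star ::
  "(complex \<Rightarrow> 'a::comm_ring_1 \<Rightarrow> 'a) \<Rightarrow> (nat \<Rightarrow> 'a set) \<Rightarrow> (nat \<Rightarrow> 'a \<Rightarrow> 'a \<Rightarrow> 'a) \<Rightarrow> bool" where
  "nondegenerate_star scA Ad C \<longleftrightarrow>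
     (\<forall>i a. a \<in> Ad i \<longrightarrow> a \<noteq> 0 \<longrightarrow> (\<exists>b\<in>Ad i. CT scA Ad (star_of C a b) \<noteq> 0))"

text \<open>S(A): nondegenerate short star-products corresponding to the quantization,
  each recorded together with the quantization map identifying it with the quantization.\<close>
definition nd_short_star_products ::
  "(complex \<Rightarrow> 'a::comm_ring_1 \<Rightarrow> 'a) \<Rightarrow> (nat \<Rightarrow> 'a set) \<Rightarrow> ('a \<Rightarrow> 'a \<Rightarrow> 'a) \<Rightarrow>
   (complex \<Rightarrow> 'b::ring_1 \<Rightarrow> 'b) \<Rightarrow> (nat \<Rightarrow> 'b set) \<Rightarrow> (nat \<Rightarrow> 'b \<Rightarrow> 'a) \<Rightarrow> ('b \<Rightarrow> 'b) \<Rightarrow>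
   ((nat \<Rightarrow> 'a \<Rightarrow> 'a \<Rightarrow> 'a) \<times> ('a \<Rightarrow> 'b)) set" where
  "nd_short_star_products scA Ad pb scB F smb s =
     {(C, \<phi>). star_product scA Ad pb C \<and> corresponds_to scA Ad scB F smb s C \<phi> \<and>
              short_star Ad C \<and> nondegenerate_star scA Ad C}"

definition trace_T ::
  "(complex \<Rightarrow> 'a::comm_ring_1 \<Rightarrow> 'a) \<Rightarrow> (nat \<Rightarrow> 'a set) \<Rightarrow>
   (nat \<Rightarrow> 'a \<Rightarrow> 'a \<Rightarrow> 'a) \<times> ('a \<Rightarrow> 'b) \<Rightarrow> 'b \<Rightarrow> complex" where
  "trace_T scA Ad P x = CT scA Ad (inv (snd P) x)"

definition filt_aut ::
  "(complex \<Rightarrow> 'b::ring_1 \<Rightarrow> 'b) \<Rightarrow> (nat \<Rightarrow> 'b set) \<Rightarrow> ('b \<Rightarrow> 'b) \<Rightarrow> ('b \<Rightarrow> 'b) set" where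
  "filt_aut scB F s =
     {g. bij g \<and> (\<forall>x y. g (x + y) = g x + g y) \<and> (\<forall>c x. g (scB c x) = scB c (g x)) \<and>
         (\<forall>x y. g (x * y) = g x * g y) \<and> g 1 = 1 \<and> (\<forall>d. g ` F d \<subseteq> F d) \<and> g \<circ> s = s \<circ> g}"

text \<open>Since s commutes with g it preserves
  K = span {a b - b g(a)}, and HH_0(A,Ag)^s = A^s / (A^s \<inter> K).  Its dual is
  represented by the linear functionals on A^s = {x. s x = x} vanishing on A^s \<inter> K
  (extended by 0 outside A^s).\<close>
definition hh0_s_dual ::
  "(complex \<Rightarrow> 'b::ring_1 \<Rightarrow> 'b) \<Rightarrow> ('b \<Rightarrow> 'b) \<Rightarrow> ('b \<Rightarrow> 'b) \<Rightarrow> ('b \<Rightarrow> complex) set" where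
  "hh0_s_dual scB s g =
     {f. (\<forall>x y. s x = x \<longrightarrow> s y = y \<longrightarrow> f (x + y) = f x + f y) \<and>
         (\<forall>c x. s x = x \<longrightarrow> f (scB c x) = c * f x) \<and>
         (\<forall>x. s x = x \<longrightarrow> x \<in> module.span scB {a * b - b * g a | a b. True} \<longrightarrow> f x = 0) \<and>
         (\<forall>x. s x \<noteq> x \<longrightarrow> f x = 0)}"

definition restrict_s :: "('b \<Rightarrow> 'b) \<Rightarrow> ('b \<Rightarrow> complex) \<Rightarrow> 'b \<Rightarrow> complex" where
  "restrict_s s T x = (if s x = x then T x else 0)"

end

theory Submission
  imports Defs "HOL-Library.Function_Algebras"
begin


lemma sum_fun_apply': "(sum f A) x = (\<Sum>a\<in>A. f a x)"
  by (induction A rule: infinite_finite_induct) (auto simp: plus_fun_def zero_fun_def)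

context vector_space begin

lemma span_eq_on_basis:
  assumes "x \<in> span B"
    and f0: "f 0 = g 0"
    and fadd: "\<And>x y. x \<in> span B \<Longrightarrow> y \<in> span B \<Longrightarrow> f (x + y) = f x + f y"
    and gadd: "\<And>x y. x \<in> span B \<Longrightarrow> y \<in> span B \<Longrightarrow> g (x + y) = g x + g y"
    and fsc: "\<And>c x. x \<in> span B \<Longrightarrow> f (c *s x) = c * f x"
    and gsc: "\<And>c x. x \<in> span B \<Longrightarrow> g (c *s x) = c * g x"
    and eqB: "\<And>b. b \<in> B \<Longrightarrow> f b = g b"
  shows "f x = (g x :: 'a)"
proof -
  have "x \<in> span B \<longrightarrow> f x = g x"
    using assms(1)
  proof (induction rule: span_induct_alt)
    case base
    then show ?case using f0 by simp
  next
    case (step c x y)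
    show ?case
    proof
      assume h: "c *s x + y \<in> span B"
      have xs: "x \<in> span B" using step(1) by (simp add: span_base)
      have cx: "c *s x \<in> span B" using xs by (simp add: span_scale)
      have ys: "y \<in> span B" using span_diff[OF h cx] by simp
      have "f (c *s x + y) = c * f x + f y" using fadd[OF cx ys] fsc[OF xs] by simp
      also have "\<dots> = c * g x + g y" using eqB[OF step(1)] step(2) ys by simp
      also have "\<dots> = g (c *s x + y)" using gadd[OF cx ys] gsc[OF xs] by simp
      finally show "f (c *s x + y) = g (c *s x + y)" .
    qed
  qed
  then show ?thesis using assms(1) by simp
qed

lemma LA_left:
  fixes \<beta> :: "'b \<Rightarrow> 'b \<Rightarrow> 'a" and f :: "'b \<Rightarrow> 'a"
  assumes fin: "finite B" and ind: "independent B"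
    and b1: "\<And>x y z. \<beta> (x + y) z = \<beta> x z + \<beta> y z"
    and b2: "\<And>c x z. \<beta> (c *s x) z = c * \<beta> x z"
    and b3: "\<And>x y z. \<beta> z (x + y) = \<beta> z x + \<beta> z y"
    and b4: "\<And>c x z. \<beta> z (c *s x) = c * \<beta> z x"
    and nd: "\<And>u. u \<in> span B \<Longrightarrow> u \<noteq> 0 \<Longrightarrow> \<exists>v\<in>span B. \<beta> u v \<noteq> 0"
    and fadd: "\<And>x y. x \<in> span B \<Longrightarrow> y \<in> span B \<Longrightarrow> f (x + y) = f x + f y"
    and fsc: "\<And>c x. x \<in> span B \<Longrightarrow> f (c *s x) = c * f x"
  shows "\<exists>u\<in>span B. \<forall>v\<in>span B. f v = \<beta> u v"
proof -
  define sc2 :: "'a \<Rightarrow> ('b \<Rightarrow> 'a) \<Rightarrow> ('b \<Rightarrow> 'a)" where "sc2 = (\<lambda>c h b. c * h b)"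
  interpret W: vector_space sc2
    by unfold_locales (auto simp: sc2_def fun_eq_iff algebra_simps)
  define L where "L = (\<lambda>u b. if b \<in> B then \<beta> u b else 0)"
  have hom: "module_hom scale sc2 L"
    unfolding module_hom_iff
    using module_axioms W.module_axioms
    by (auto simp: L_def sc2_def fun_eq_iff b1 b2)
  interpret H: module_hom scale sc2 L by (rule hom)
  have zero_span: "\<beta> u v = 0" if "\<forall>b\<in>B. \<beta> u b = 0" "v \<in> span B" for u v
  proof -
    have "\<beta> u 0 = 0" using b4[where c=0 and x=0 and z=u] by simp
    then show ?thesis
      using span_eq_on_basis[OF that(2), of "\<beta> u" "\<lambda>_. 0"] that(1) b3 b4 by auto
  qed
  have inj: "inj_on L (span B)"
    unfolding H.inj_on_iff_eq_0[OF subspace_span]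
  proof (intro ballI impI)
    fix x assume x: "x \<in> span B" "L x = 0"
    then have "\<forall>b\<in>B. \<beta> x b = 0" by (auto simp: L_def fun_eq_iff) metis
    then show "x = 0" using zero_span nd x(1) by blast
  qed
  have indL: "W.independent (L ` B)"
    by (rule H.independent_injective_image[OF ind inj])
  have cardL: "card (L ` B) = card B"
    by (rule card_image, rule inj_on_subset[OF inj span_superset])
  define e where "e = (\<lambda>b (b'::'b). if b' = b then (1::'a) else 0)"
  have inE: "h \<in> W.span (e ` B)" if "\<forall>b. b \<notin> B \<longrightarrow> h b = 0" for h
  proof -
    have "h = (\<Sum>b\<in>B. sc2 (h b) (e b))"
    proof
      fix b'
      have "(\<Sum>b\<in>B. sc2 (h b) (e b)) b' = (\<Sum>b\<in>B. h b * (if b' = b then 1 else 0))"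
        by (simp add: sc2_def e_def sum_fun_apply')
      also have "\<dots> = h b'" using that fin by (auto simp: if_distrib sum.delta' cong: if_cong)
      finally show "h b' = (\<Sum>b\<in>B. sc2 (h b) (e b)) b'" by simp
    qed
    also have "\<dots> \<in> W.span (e ` B)"
      by (intro W.span_sum W.span_scale W.span_base) auto
    finally show ?thesis .
  qed
  have LB: "L ` B \<subseteq> W.span (e ` B)"
    using inE by (auto simp: L_def)
  define h where "h = (\<lambda>b. if b \<in> B then f b else 0)"
  have "h \<in> W.span (L ` B)"
  proof (rule ccontr)
    assume nh: "h \<notin> W.span (L ` B)"
    have i2: "W.independent (insert h (L ` B))"
      by (rule W.independent_insertI[OF nh indL])
    have "insert h (L ` B) \<subseteq> W.span (e ` B)"
      using LB inE[of h] by (auto simp: h_def)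
    from W.independent_span_bound[OF _ i2 this] fin
    have "card (insert h (L ` B)) \<le> card (e ` B)" by simp
    also have "\<dots> \<le> card B" using fin by (rule card_image_le)
    finally have "card (insert h (L ` B)) \<le> card B" .
    moreover have "h \<notin> L ` B" using nh W.span_base by blast
    ultimately show False using cardL fin by simp
  qed
  then obtain u where u: "u \<in> span B" "h = L u"
    using H.span_image by auto
  have "\<forall>v\<in>span B. f v = \<beta> u v"
  proof
    fix v assume v: "v \<in> span B"
    show "f v = \<beta> u v"
    proof (rule span_eq_on_basis[OF v])
      show "f 0 = \<beta> u 0" using fsc[where c=0 and x=0] b4[where c=0 and x=0 and z=u] by (simp add: span_zero)
      show "\<beta> u (x + y) = \<beta> u x + \<beta> u y" for x y by (rule b3)
      show "\<beta> u (c *s x) = c * \<beta> u x" for c x by (rule b4)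
      show "f b = \<beta> u b" if "b \<in> B" for b
        using u(2) that by (auto simp: h_def L_def fun_eq_iff) metis
    qed (use fadd fsc in auto)
  qed
  then show ?thesis using u(1) by blast
qed


lemma LA_right_nd:
  fixes \<beta> :: "'b \<Rightarrow> 'b \<Rightarrow> 'a"
  assumes fin: "finite B" and ind: "independent B"
    and b1: "\<And>x y z. \<beta> (x + y) z = \<beta> x z + \<beta> y z"
    and b2: "\<And>c x z. \<beta> (c *s x) z = c * \<beta> x z"
    and b3: "\<And>x y z. \<beta> z (x + y) = \<beta> z x + \<beta> z y"
    and b4: "\<And>c x z. \<beta> z (c *s x) = c * \<beta> z x"
    and nd: "\<And>u. u \<in> span B \<Longrightarrow> u \<noteq> 0 \<Longrightarrow> \<exists>v\<in>span B. \<beta> u v \<noteq> 0"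
    and w: "w \<in> span B" "w \<noteq> 0"
  shows "\<exists>v\<in>span B. \<beta> v w \<noteq> 0"
proof -
  have "(\<Sum>b\<in>B. representation B w b *s b) = w"
    by (rule sum_representation_eq[OF ind w(1) fin order_refl])
  then obtain b0 where b0: "representation B w b0 \<noteq> 0"
    using w(2) by (metis (no_types, lifting) scale_zero_left sum.neutral)
  obtain u where u: "u \<in> span B" "\<forall>v\<in>span B. representation B v b0 = \<beta> u v"
    using LA_left[OF fin ind b1 b2 b3 b4 nd, of "\<lambda>v. representation B v b0"]
    by (auto simp: representation_add[OF ind] representation_scale[OF ind])
  then show ?thesis using b0 w(1) by metis
qed

lemma LA_right:
  fixes \<beta> :: "'b \<Rightarrow> 'b \<Rightarrow> 'a" and f :: "'b \<Rightarrow> 'a"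
  assumes fin: "finite B" and ind: "independent B"
    and b1: "\<And>x y z. \<beta> (x + y) z = \<beta> x z + \<beta> y z"
    and b2: "\<And>c x z. \<beta> (c *s x) z = c * \<beta> x z"
    and b3: "\<And>x y z. \<beta> z (x + y) = \<beta> z x + \<beta> z y"
    and b4: "\<And>c x z. \<beta> z (c *s x) = c * \<beta> z x"
    and nd: "\<And>u. u \<in> span B \<Longrightarrow> u \<noteq> 0 \<Longrightarrow> \<exists>v\<in>span B. \<beta> u v \<noteq> 0"
    and fadd: "\<And>x y. x \<in> span B \<Longrightarrow> y \<in> span B \<Longrightarrow> f (x + y) = f x + f y"
    and fsc: "\<And>c x. x \<in> span B \<Longrightarrow> f (c *s x) = c * f x"
  shows "\<exists>w\<in>span B. \<forall>v\<in>span B. f v = \<beta> v w"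
proof -
  have nd': "\<exists>v\<in>span B. \<beta> v u \<noteq> 0" if "u \<in> span B" "u \<noteq> 0" for u
    by (rule LA_right_nd[OF fin ind b1 b2 b3 b4 nd that])
  show ?thesis
    using LA_left[OF fin ind, of "\<lambda>x y. \<beta> y x" f] b1 b2 b3 b4 nd' fadd fsc by auto
qed

end


locale gr =
  fixes scA :: "complex \<Rightarrow> 'a::comm_ring_1 \<Rightarrow> 'a" and Ad :: "nat \<Rightarrow> 'a set"
    and pb :: "'a \<Rightarrow> 'a \<Rightarrow> 'a"
  assumes gpa: "graded_poisson_alg scA Ad pb"

sublocale gr \<subseteq> A: vector_space scA
  using gpa unfolding graded_poisson_alg_def by simp

context gr begin

lemma Ad_sub: "A.subspace (Ad d)"
  using gpa unfolding graded_poisson_alg_def by simp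

lemma decomp: "\<exists>!f. finite {d. f d \<noteq> 0} \<and> (\<forall>d. f d \<in> Ad d) \<and> x = (\<Sum>d\<in>{d. f d \<noteq> 0}. f d)"
  using gpa unfolding graded_poisson_alg_def by (elim conjE) (rule spec)

lemma one_ne: "(1::'a) \<noteq> 0"
  using gpa unfolding graded_poisson_alg_def by simp

lemma Ad0: "Ad 0 = range (\<lambda>c. scA c 1)"
  using gpa unfolding graded_poisson_alg_def by simp

lemma Ad_fin: "\<exists>G. finite G \<and> G \<subseteq> Ad d \<and> A.span G = Ad d"
  using gpa unfolding graded_poisson_alg_def by (elim conjE) (rule spec)

lemma Ad_zero: "0 \<in> Ad d" using Ad_sub A.subspace_0 by blast
lemma Ad_add: "x \<in> Ad d \<Longrightarrow> y \<in> Ad d \<Longrightarrow> x + y \<in> Ad d" using Ad_sub A.subspace_add by blast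
lemma Ad_diff: "x \<in> Ad d \<Longrightarrow> y \<in> Ad d \<Longrightarrow> x - y \<in> Ad d" using Ad_sub A.subspace_diff by blast
lemma Ad_scale: "x \<in> Ad d \<Longrightarrow> scA c x \<in> Ad d" using Ad_sub A.subspace_scale by blast

definition hc :: "'a \<Rightarrow> nat \<Rightarrow> 'a" where
  "hc x = (THE f. finite {d. f d \<noteq> 0} \<and> (\<forall>d. f d \<in> Ad d) \<and> x = (\<Sum>d\<in>{d. f d \<noteq> 0}. f d))"

lemma hc_props: "finite {d. hc x d \<noteq> 0} \<and> (\<forall>d. hc x d \<in> Ad d) \<and> x = (\<Sum>d\<in>{d. hc x d \<noteq> 0}. hc x d)"
  unfolding hc_def by (rule theI'[OF decomp])

lemma hc_fin: "finite {d. hc x d \<noteq> 0}" using hc_props by blast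
lemma hc_in: "hc x d \<in> Ad d" using hc_props by blast

lemma hc_sumD: assumes "finite D" "{d. hc x d \<noteq> 0} \<subseteq> D" shows "x = (\<Sum>d\<in>D. hc x d)"
proof -
  have "x = (\<Sum>d\<in>{d. hc x d \<noteq> 0}. hc x d)" using hc_props by blast
  also have "\<dots> = (\<Sum>d\<in>D. hc x d)"
    by (rule sum.mono_neutral_left) (use assms in auto)
  finally show ?thesis .
qed

lemma hc_unique:
  assumes "finite D" "\<forall>d. f d \<in> Ad d" "\<forall>d. d \<notin> D \<longrightarrow> f d = 0" "x = (\<Sum>d\<in>D. f d)"
  shows "hc x = f"
proof -
  have "x = (\<Sum>d\<in>{d. f d \<noteq> 0}. f d)"
    using assms(4) by (simp add: sum.mono_neutral_right[OF assms(1)] assms(3)) 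
       (rule sum.mono_neutral_right[OF assms(1)], use assms(3) in auto)
  moreover have "finite {d. f d \<noteq> 0}" using assms(1,3) by (metis (mono_tags) finite_subset mem_Collect_eq subsetI)
  ultimately show ?thesis unfolding hc_def
    using assms(2) by (intro the1_equality[OF decomp]) auto
qed

lemma hc_add: "hc (x + y) = (\<lambda>d. hc x d + hc y d)"
proof (rule hc_unique)
  let ?D = "{d. hc x d \<noteq> 0} \<union> {d. hc y d \<noteq> 0}"
  show "finite ?D" using hc_fin by auto
  show "\<forall>d. hc x d + hc y d \<in> Ad d" using hc_in Ad_add by blast
  show "\<forall>d. d \<notin> ?D \<longrightarrow> hc x d + hc y d = 0" by auto
  have "x = (\<Sum>d\<in>?D. hc x d)" "y = (\<Sum>d\<in>?D. hc y d)" using hc_fin by (auto intro!: hc_sumD)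
  then show "x + y = (\<Sum>d\<in>?D. hc x d + hc y d)" by (simp add: sum.distrib)
qed

lemma hc_diff: "hc (x - y) = (\<lambda>d. hc x d - hc y d)"
proof (rule hc_unique)
  let ?D = "{d. hc x d \<noteq> 0} \<union> {d. hc y d \<noteq> 0}"
  show "finite ?D" using hc_fin by auto
  show "\<forall>d. hc x d - hc y d \<in> Ad d" using hc_in Ad_diff by blast
  show "\<forall>d. d \<notin> ?D \<longrightarrow> hc x d - hc y d = 0" by auto
  have "x = (\<Sum>d\<in>?D. hc x d)" "y = (\<Sum>d\<in>?D. hc y d)" using hc_fin by (auto intro!: hc_sumD)
  then show "x - y = (\<Sum>d\<in>?D. hc x d - hc y d)" by (simp add: sum_subtractf)
qed

lemma hc_scale: "hc (scA c x) = (\<lambda>d. scA c (hc x d))"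
proof (rule hc_unique)
  let ?D = "{d. hc x d \<noteq> 0}"
  show "finite ?D" using hc_fin by auto
  show "\<forall>d. scA c (hc x d) \<in> Ad d" using hc_in Ad_scale by blast
  show "\<forall>d. d \<notin> ?D \<longrightarrow> scA c (hc x d) = 0" by auto
  have "x = (\<Sum>d\<in>?D. hc x d)" using hc_fin by (auto intro!: hc_sumD)
  then show "scA c x = (\<Sum>d\<in>?D. scA c (hc x d))" by (metis A.scale_sum_right)
qed

lemma hc_zero: "hc 0 = (\<lambda>d. 0)"
  by (rule hc_unique[of "{}"]) (auto simp: Ad_zero)

lemma hc_hom: "y \<in> Ad e \<Longrightarrow> hc y = (\<lambda>d. if d = e then y else 0)"
  by (rule hc_unique[of "{e}"]) (auto simp: Ad_zero)

lemma hc_sum: "hc (\<Sum>i\<in>I. x i) d = (\<Sum>i\<in>I. hc (x i) d)"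
  by (induction I rule: infinite_finite_induct) (auto simp: hc_zero hc_add)

lemma span_pos_hc0:
  assumes "y \<in> A.span (\<Union>d\<in>{1..}. Ad d)" shows "hc y 0 = 0"
proof -
  have "A.span (\<Union>d\<in>{1..}. Ad d) \<subseteq> {y. hc y 0 = 0}"
  proof (rule A.span_minimal)
    show "(\<Union>d\<in>{1..}. Ad d) \<subseteq> {y. hc y 0 = 0}" by (auto simp: hc_hom)
    show "A.subspace {y. hc y 0 = 0}"
      unfolding A.subspace_def by (auto simp: hc_zero hc_add hc_scale)
  qed
  then show ?thesis using assms by auto
qed

lemma CT_eq: assumes "hc x 0 = scA c 1" shows "CT scA Ad x = c"
  unfolding CT_def
proof (rule the_equality)
  let ?D = "{d. hc x d \<noteq> 0} \<union> {0}"
  have "x = (\<Sum>d\<in>?D. hc x d)" using hc_fin by (auto intro!: hc_sumD)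
  also have "\<dots> = hc x 0 + (\<Sum>d\<in>?D - {0}. hc x d)"
    by (rule sum.remove) (use hc_fin in auto)
  finally have "x - scA c 1 = (\<Sum>d\<in>?D - {0}. hc x d)" using assms by (simp add: algebra_simps)
  also have "\<dots> \<in> A.span (\<Union>d\<in>{1..}. Ad d)"
    by (intro A.span_sum A.span_base) (auto intro!: exI hc_in simp: Suc_le_eq)
  finally show "x - scA c 1 \<in> A.span (\<Union>d\<in>{1..}. Ad d)" .
  fix c' assume "x - scA c' 1 \<in> A.span (\<Union>d\<in>{1..}. Ad d)"
  then have "hc (x - scA c' 1) 0 = 0" by (rule span_pos_hc0)
  moreover have "hc (scA c' 1) 0 = scA c' 1" using Ad0 by (subst hc_hom[of _ 0]) auto
  ultimately have "scA c 1 = scA c' 1" using assms by (simp add: hc_diff)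
  then show "c' = c" using one_ne by simp
qed

lemma hc0_CT: "hc x 0 = scA (CT scA Ad x) 1"
proof -
  obtain c where c: "hc x 0 = scA c 1" using hc_in[of x 0] Ad0 by auto
  then show ?thesis using CT_eq[OF c] by simp
qed

lemma CT_add: "CT scA Ad (x + y) = CT scA Ad x + CT scA Ad y"
  by (rule CT_eq) (simp add: hc_add hc0_CT[of x] hc0_CT[of y] A.scale_left_distrib)

lemma CT_diff: "CT scA Ad (x - y) = CT scA Ad x - CT scA Ad y"
  by (rule CT_eq) (simp add: hc_diff hc0_CT[of x] hc0_CT[of y] A.scale_left_diff_distrib)

lemma CT_scale: "CT scA Ad (scA c x) = c * CT scA Ad x"
  by (rule CT_eq) (simp add: hc_scale hc0_CT[of x])

lemma CT_zero: "CT scA Ad 0 = 0"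
  by (rule CT_eq) (simp add: hc_zero)

lemma CT_sum: "CT scA Ad (\<Sum>i\<in>I. x i) = (\<Sum>i\<in>I. CT scA Ad (x i))"
  by (induction I rule: infinite_finite_induct) (auto simp: CT_zero CT_add)

lemma CT_hom: "y \<in> Ad d \<Longrightarrow> d \<noteq> 0 \<Longrightarrow> CT scA Ad y = 0"
  by (rule CT_eq) (simp add: hc_hom)

end


locale qsetup = gr scA Ad pb
  for scA :: "complex \<Rightarrow> 'a::comm_ring_1 \<Rightarrow> 'a" and Ad :: "nat \<Rightarrow> 'a set"
    and pb :: "'a \<Rightarrow> 'a \<Rightarrow> 'a" +
  fixes scB :: "complex \<Rightarrow> 'b::ring_1 \<Rightarrow> 'b" and F :: "nat \<Rightarrow> 'b set"
    and smb :: "nat \<Rightarrow> 'b \<Rightarrow> 'a" and s :: "'b \<Rightarrow> 'b"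
    and C :: "nat \<Rightarrow> 'a \<Rightarrow> 'a \<Rightarrow> 'a" and \<phi> :: "'a \<Rightarrow> 'b"
  assumes fq: "filtered_quantization scA Ad pb scB F smb s"
    and PS: "(C, \<phi>) \<in> nd_short_star_products scA Ad pb scB F smb s"

sublocale qsetup \<subseteq> B: vector_space scB
  using fq unfolding filtered_quantization_def by simp

context qsetup begin

lemma scB_mult1: "scB c (x * y) = scB c x * y"
  using fq unfolding filtered_quantization_def by simp
lemma scB_mult2: "scB c (x * y) = x * scB c y"
  using fq unfolding filtered_quantization_def by (elim conjE) metis
lemma F_sub: "B.subspace (F d)"
  using fq unfolding filtered_quantization_def by simp
lemma F_Suc: "F d \<subseteq> F (Suc d)"
  using fq unfolding filtered_quantization_def by simp
lemma F_all: "\<exists>d. x \<in> F d"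
  using fq unfolding filtered_quantization_def by (elim conjE) (metis UNIV_I UN_iff)
lemma smb_add: "x \<in> F d \<Longrightarrow> y \<in> F d \<Longrightarrow> smb d (x + y) = smb d x + smb d y"
  using fq unfolding filtered_quantization_def by simp
lemma smb_scale: "x \<in> F d \<Longrightarrow> smb d (scB c x) = scA c (smb d x)"
  using fq unfolding filtered_quantization_def by simp
lemma smb_onto: "smb d ` F d = Ad d"
  using fq unfolding filtered_quantization_def by simp
lemma smb_ker: "x \<in> F d \<Longrightarrow> smb d x = 0 \<longleftrightarrow> x \<in> (if d = 0 then {0} else F (d - 1))"
  using fq unfolding filtered_quantization_def by simp
lemma s_s: "s (s x) = x"
  using fq unfolding filtered_quantization_def by simp
lemma s_add: "s (x + y) = s x + s y"
  using fq unfolding filtered_quantization_def by simp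
lemma s_scale: "s (scB c x) = scB c (s x)"
  using fq unfolding filtered_quantization_def by simp
lemma s_mult: "s (x * y) = s x * s y"
  using fq unfolding filtered_quantization_def by simp

lemma starP: "star_product scA Ad pb C"
  using PS unfolding nd_short_star_products_def by simp
lemma C_add1: "C k (x + y) z = C k x z + C k y z"
  using starP unfolding star_product_def by simp
lemma C_add2: "C k x (y + z) = C k x y + C k x z"
  using starP unfolding star_product_def by simp
lemma C_grade: "a \<in> Ad d \<Longrightarrow> b \<in> Ad e \<Longrightarrow> C k a b \<in> (if 2 * k \<le> d + e then Ad (d + e - 2 * k) else {0})"
  using starP unfolding star_product_def by (elim conjE) metis
lemma qm: "quantization_map scA Ad scB F smb s \<phi>"
  using PS unfolding nd_short_star_products_def corresponds_to_def by simp
lemma phi_star: "\<phi> (star_of C a b) = \<phi> a * \<phi> b"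
  using PS unfolding nd_short_star_products_def corresponds_to_def by simp
lemma short: "a \<in> Ad d \<Longrightarrow> b \<in> Ad e \<Longrightarrow> min d e < k \<Longrightarrow> C k a b = 0"
  using PS unfolding nd_short_star_products_def short_star_def by simp
lemma nondeg: "a \<in> Ad i \<Longrightarrow> a \<noteq> 0 \<Longrightarrow> \<exists>b\<in>Ad i. CT scA Ad (star_of C a b) \<noteq> 0"
  using PS unfolding nd_short_star_products_def nondegenerate_star_def by simp
lemma phi_bij: "bij \<phi>" using qm unfolding quantization_map_def by simp
lemma phi_add: "\<phi> (x + y) = \<phi> x + \<phi> y" using qm unfolding quantization_map_def by simp
lemma phi_scale: "\<phi> (scA c x) = scB c (\<phi> x)" using qm unfolding quantization_map_def by simp
lemma phi_F: "a \<in> Ad d \<Longrightarrow> \<phi> a \<in> F d" using qm unfolding quantization_map_def by simp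
lemma phi_smb: "a \<in> Ad d \<Longrightarrow> smb d (\<phi> a) = a" using qm unfolding quantization_map_def by simp
lemma phi_s: "a \<in> Ad d \<Longrightarrow> s (\<phi> a) = scB ((-1) ^ d) (\<phi> a)" using qm unfolding quantization_map_def by simp

end


context qsetup begin

definition T :: "'b \<Rightarrow> complex" where "T x = CT scA Ad (inv \<phi> x)"
definition bc :: "'b \<Rightarrow> nat \<Rightarrow> 'b" where "bc x d = \<phi> (hc (inv \<phi> x) d)"

lemma T_trace: "trace_T scA Ad (C, \<phi>) = T"
  by (simp add: fun_eq_iff trace_T_def T_def)

lemma psi_phi[simp]: "inv \<phi> (\<phi> a) = a"
  using phi_bij by (simp add: bij_is_inj)
lemma phi_psi[simp]: "\<phi> (inv \<phi> x) = x"
  using phi_bij by (simp add: bij_is_surj surj_f_inv_f)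
lemma phi_inj: "\<phi> a = \<phi> b \<Longrightarrow> a = b"
  by (metis psi_phi)
lemma phi_zero[simp]: "\<phi> 0 = 0"
  using phi_add[of 0 0] by simp
lemma phi_diff: "\<phi> (x - y) = \<phi> x - \<phi> y"
  using phi_add[of "x - y" y] by (simp add: algebra_simps)
lemma phi_sum: "\<phi> (\<Sum>i\<in>I. f i) = (\<Sum>i\<in>I. \<phi> (f i))"
  by (induction I rule: infinite_finite_induct) (auto simp: phi_add)
lemma psi_add: "inv \<phi> (x + y) = inv \<phi> x + inv \<phi> y"
  by (rule phi_inj) (simp add: phi_add)
lemma psi_diff: "inv \<phi> (x - y) = inv \<phi> x - inv \<phi> y"
  by (rule phi_inj) (simp add: phi_diff)
lemma psi_scale: "inv \<phi> (scB c x) = scA c (inv \<phi> x)"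
  by (rule phi_inj) (simp add: phi_scale)
lemma psi_zero[simp]: "inv \<phi> 0 = 0"
  by (rule phi_inj) simp

lemma T_add: "T (x + y) = T x + T y" by (simp add: T_def psi_add CT_add)
lemma T_diff: "T (x - y) = T x - T y" by (simp add: T_def psi_diff CT_diff)
lemma T_scale: "T (scB c x) = c * T x" by (simp add: T_def psi_scale CT_scale)
lemma T_zero[simp]: "T 0 = 0" by (simp add: T_def CT_zero)
lemma T_sum: "T (\<Sum>i\<in>I. f i) = (\<Sum>i\<in>I. T (f i))"
  by (induction I rule: infinite_finite_induct) (auto simp: T_add)
lemma T_phi: "T (\<phi> a) = CT scA Ad a" by (simp add: T_def)

lemma b1: "T ((x + y) * z) = T (x * z) + T (y * z)" by (simp add: distrib_right T_add)
lemma b2: "T (scB c x * z) = c * T (x * z)" by (simp add: scB_mult1[symmetric] T_scale)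
lemma b3: "T (z * (x + y)) = T (z * x) + T (z * y)" by (simp add: distrib_left T_add)
lemma b4: "T (z * scB c x) = c * T (z * x)" by (simp add: scB_mult2[symmetric] T_scale)

lemma bc_in: "bc x d \<in> \<phi> ` Ad d" by (simp add: bc_def hc_in)
lemma F_mono: "d \<le> e \<Longrightarrow> F d \<subseteq> F e"
  by (induction e rule: dec_induct) (use F_Suc in auto)
lemma F_zero: "0 \<in> F d" using F_sub B.subspace_0 by blast
lemma F_diff: "x \<in> F d \<Longrightarrow> y \<in> F d \<Longrightarrow> x - y \<in> F d" using F_sub B.subspace_diff by blast
lemma bc_F: "bc x d \<in> F d" using phi_F[OF hc_in] by (simp add: bc_def)
lemma bc_sumD: assumes "finite D" "{d. hc (inv \<phi> x) d \<noteq> 0} \<subseteq> D" shows "x = (\<Sum>d\<in>D. bc x d)"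
proof -
  have "x = \<phi> (inv \<phi> x)" by simp
  also have "\<dots> = \<phi> (\<Sum>d\<in>D. hc (inv \<phi> x) d)" using hc_sumD[OF assms] by simp
  finally show ?thesis by (simp add: phi_sum bc_def)
qed
lemma bc_zero: "hc (inv \<phi> x) d = 0 \<Longrightarrow> bc x d = 0" by (simp add: bc_def)

lemma smb_diff: "x \<in> F d \<Longrightarrow> y \<in> F d \<Longrightarrow> smb d (x - y) = smb d x - smb d y"
  using smb_add[of "x - y" d y] F_diff by (simp add: algebra_simps)

lemma F_hc: "x \<in> F d \<Longrightarrow> d < e \<Longrightarrow> hc (inv \<phi> x) e = 0"
proof (induction d arbitrary: x e)
  case 0
  obtain a where a: "a \<in> Ad 0" "smb 0 x = a" using smb_onto 0 by blast
  have u: "x - \<phi> a \<in> F 0" using F_diff 0 phi_F a by blast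
  have "smb 0 (x - \<phi> a) = 0" using smb_diff[OF 0(1) phi_F[OF a(1)]] a phi_smb by simp
  then have "x - \<phi> a = 0" using smb_ker[OF u] by simp
  then have "inv \<phi> x = a" by (metis eq_iff_diff_eq_0 psi_phi)
  then show ?case using hc_hom[OF a(1)] 0 by simp
next
  case (Suc d)
  obtain a where a: "a \<in> Ad (Suc d)" "smb (Suc d) x = a" using smb_onto Suc by blast
  have u: "x - \<phi> a \<in> F (Suc d)" using F_diff Suc phi_F a by blast
  have "smb (Suc d) (x - \<phi> a) = 0" using smb_diff[OF Suc(2) phi_F[OF a(1)]] a phi_smb by simp
  then have "x - \<phi> a \<in> F d" using smb_ker[OF u] by simp
  then have "hc (inv \<phi> (x - \<phi> a)) e = 0" using Suc by simp
  then have "hc (inv \<phi> x) e - hc a e = 0" by (simp add: psi_diff hc_diff)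
  then show ?case using hc_hom[OF a(1)] Suc by simp
qed

lemma star_fin: assumes "a \<in> Ad i" "b \<in> Ad j" shows "{k. C k a b \<noteq> 0} \<subseteq> {..i+j}"
proof
  fix k assume "k \<in> {k. C k a b \<noteq> 0}"
  then show "k \<in> {..i+j}" using C_grade[OF assms, of k] by (auto split: if_splits)
qed

lemma CT_star_orth: assumes a: "a \<in> Ad i" and b: "b \<in> Ad j" and ij: "i \<noteq> j"
  shows "CT scA Ad (star_of C a b) = 0"
proof -
  have fin: "finite {k. C k a b \<noteq> 0}" using star_fin[OF a b] finite_subset by blast
  have "CT scA Ad (star_of C a b) = (\<Sum>k\<in>{k. C k a b \<noteq> 0}. CT scA Ad (C k a b))"
    by (simp add: star_of_def CT_sum)
  also have "\<dots> = 0"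
  proof (rule sum.neutral, rule ballI)
    fix k assume "k \<in> {k. C k a b \<noteq> 0}"
    then have nz: "C k a b \<noteq> 0" by simp
    then have k1: "k \<le> min i j" using short[OF a b] by (meson not_le)
    have "2 * k \<le> i + j" using k1 by simp
    then have "C k a b \<in> Ad (i + j - 2 * k)" using C_grade[OF a b, of k] by simp
    moreover have "i + j - 2 * k \<noteq> 0" using k1 ij by auto
    ultimately show "CT scA Ad (C k a b) = 0" by (rule CT_hom)
  qed
  finally show ?thesis .
qed

lemma T_blk: "T (\<phi> a * \<phi> b) = CT scA Ad (star_of C a b)"
  by (simp add: phi_star[symmetric] T_phi)

lemma T_orth: "a \<in> Ad i \<Longrightarrow> b \<in> Ad j \<Longrightarrow> i \<noteq> j \<Longrightarrow> T (\<phi> a * \<phi> b) = 0"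
  by (simp add: T_blk CT_star_orth)

lemma T_mul_blk_left: assumes a: "a \<in> Ad d" shows "T (\<phi> a * y) = T (\<phi> a * bc y d)"
proof -
  let ?D = "{e. hc (inv \<phi> y) e \<noteq> 0} \<union> {d}"
  have fin: "finite ?D" using hc_fin by simp
  have "y = (\<Sum>e\<in>?D. bc y e)" by (rule bc_sumD[OF fin]) auto
  then have "T (\<phi> a * y) = T (\<phi> a * (\<Sum>e\<in>?D. bc y e))" by simp
  also have "\<dots> = (\<Sum>e\<in>?D. T (\<phi> a * bc y e))" by (simp add: sum_distrib_left T_sum)
  also have "\<dots> = T (\<phi> a * bc y d) + (\<Sum>e\<in>?D - {d}. T (\<phi> a * bc y e))"
    by (rule sum.remove[OF fin]) simp
  also have "(\<Sum>e\<in>?D - {d}. T (\<phi> a * bc y e)) = 0"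
    by (rule sum.neutral) (auto simp: bc_def intro!: T_orth[OF a] hc_in)
  finally show ?thesis by simp
qed

lemma T_mul_blk_right: assumes b: "b \<in> Ad d" shows "T (x * \<phi> b) = T (bc x d * \<phi> b)"
proof -
  let ?D = "{e. hc (inv \<phi> x) e \<noteq> 0} \<union> {d}"
  have fin: "finite ?D" using hc_fin by simp
  have "x = (\<Sum>e\<in>?D. bc x e)" by (rule bc_sumD[OF fin]) auto
  then have "T (x * \<phi> b) = T ((\<Sum>e\<in>?D. bc x e) * \<phi> b)" by simp
  also have "\<dots> = (\<Sum>e\<in>?D. T (bc x e * \<phi> b))" by (simp add: sum_distrib_right T_sum)
  also have "\<dots> = T (bc x d * \<phi> b) + (\<Sum>e\<in>?D - {d}. T (bc x e * \<phi> b))"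
    by (rule sum.remove[OF fin]) simp
  also have "(\<Sum>e\<in>?D - {d}. T (bc x e * \<phi> b)) = 0"
    by (rule sum.neutral) (auto simp: bc_def intro!: T_orth[OF _ b] hc_in)
  finally show ?thesis by simp
qed

end


context qsetup begin

lemma phi_hom: "module_hom scA scB \<phi>"
proof -
  have "module scA" using A.vector_space_axioms module_iff_vector_space by blast
  moreover have "module scB" using B.vector_space_axioms module_iff_vector_space by blast
  ultimately show ?thesis unfolding module_hom_iff by (simp add: phi_add phi_scale)
qed

lemma blk_basis: "\<exists>Bb. finite Bb \<and> B.independent Bb \<and> B.span Bb = \<phi> ` Ad d"
proof -
  obtain G where G: "finite G" "G \<subseteq> Ad d" "A.span G = Ad d" using Ad_fin by blast
  have sp: "B.span (\<phi> ` G) = \<phi> ` Ad d"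
    using module_hom.span_image[OF phi_hom, of G] G(3) by simp
  obtain Bb where Bb: "Bb \<subseteq> \<phi> ` G" "B.independent Bb" "\<phi> ` G \<subseteq> B.span Bb"
      "card Bb = B.dim (\<phi> ` G)"
    by (rule B.basis_exists)
  have "B.span Bb = B.span (\<phi> ` G)"
  proof
    show "B.span Bb \<subseteq> B.span (\<phi> ` G)" using Bb(1) by (rule B.span_mono)
    show "B.span (\<phi> ` G) \<subseteq> B.span Bb" by (rule B.span_minimal[OF Bb(3) B.subspace_span])
  qed
  moreover have "finite Bb" using Bb(1) G(1) by (meson finite_imageI finite_subset)
  ultimately show ?thesis using Bb(2) sp by metis
qed

lemma blk_nd_left: "u \<in> \<phi> ` Ad d \<Longrightarrow> u \<noteq> 0 \<Longrightarrow> \<exists>v\<in>\<phi> ` Ad d. T (u * v) \<noteq> 0"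
proof -
  assume u: "u \<in> \<phi> ` Ad d" "u \<noteq> 0"
  then obtain a where a: "a \<in> Ad d" "u = \<phi> a" by blast
  then have "a \<noteq> 0" using u by auto
  then obtain b where b: "b \<in> Ad d" "CT scA Ad (star_of C a b) \<noteq> 0" using nondeg a by blast
  have "\<phi> b \<in> \<phi> ` Ad d" using b(1) by simp
  moreover have "T (u * \<phi> b) \<noteq> 0" using b(2) a(2) T_blk[of a b] by simp
  ultimately show ?thesis by blast
qed

lemma blk_nd_right: "w \<in> \<phi> ` Ad d \<Longrightarrow> w \<noteq> 0 \<Longrightarrow> \<exists>v\<in>\<phi> ` Ad d. T (v * w) \<noteq> 0"
proof -
  assume w: "w \<in> \<phi> ` Ad d" "w \<noteq> 0"
  obtain Bb where Bb: "finite Bb" "B.independent Bb" "B.span Bb = \<phi> ` Ad d" using blk_basis by blast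
  have nd: "\<exists>v\<in>B.span Bb. T (u * v) \<noteq> 0" if "u \<in> B.span Bb" "u \<noteq> 0" for u
    using blk_nd_left[of u d] that Bb(3) by simp
  have "\<exists>v\<in>B.span Bb. (\<lambda>x y. T (x * y)) v w \<noteq> 0"
    by (rule B.LA_right_nd[OF Bb(1,2)], rule b1, rule b2, rule b3, rule b4, rule nd)
       (use w Bb(3) in simp_all)
  then show ?thesis using Bb(3) by simp
qed

lemma blk_repr_left:
  assumes fadd: "\<And>x y. x \<in> \<phi> ` Ad d \<Longrightarrow> y \<in> \<phi> ` Ad d \<Longrightarrow> f (x + y) = f x + f y"
    and fsc: "\<And>c x. x \<in> \<phi> ` Ad d \<Longrightarrow> f (scB c x) = c * f x"
  shows "\<exists>u\<in>\<phi> ` Ad d. \<forall>v\<in>\<phi> ` Ad d. f v = T (u * v)"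
proof -
  obtain Bb where Bb: "finite Bb" "B.independent Bb" "B.span Bb = \<phi> ` Ad d" using blk_basis by blast
  have nd: "\<exists>v\<in>B.span Bb. T (u * v) \<noteq> 0" if "u \<in> B.span Bb" "u \<noteq> 0" for u
    using blk_nd_left[of u d] that Bb(3) by simp
  have "\<exists>u\<in>B.span Bb. \<forall>v\<in>B.span Bb. f v = (\<lambda>x y. T (x * y)) u v"
    by (rule B.LA_left[OF Bb(1,2)], rule b1, rule b2, rule b3, rule b4, rule nd)
       (use fadd fsc Bb(3) in simp_all)
  then show ?thesis using Bb(3) by simp
qed

lemma blk_repr_right:
  assumes fadd: "\<And>x y. x \<in> \<phi> ` Ad d \<Longrightarrow> y \<in> \<phi> ` Ad d \<Longrightarrow> f (x + y) = f x + f y"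
    and fsc: "\<And>c x. x \<in> \<phi> ` Ad d \<Longrightarrow> f (scB c x) = c * f x"
  shows "\<exists>w\<in>\<phi> ` Ad d. \<forall>v\<in>\<phi> ` Ad d. f v = T (v * w)"
proof -
  obtain Bb where Bb: "finite Bb" "B.independent Bb" "B.span Bb = \<phi> ` Ad d" using blk_basis by blast
  have nd: "\<exists>v\<in>B.span Bb. T (u * v) \<noteq> 0" if "u \<in> B.span Bb" "u \<noteq> 0" for u
    using blk_nd_left[of u d] that Bb(3) by simp
  have "\<exists>w\<in>B.span Bb. \<forall>v\<in>B.span Bb. f v = (\<lambda>x y. T (x * y)) v w"
    by (rule B.LA_right[OF Bb(1,2)], rule b1, rule b2, rule b3, rule b4, rule nd)
       (use fadd fsc Bb(3) in simp_all)
  then show ?thesis using Bb(3) by simp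
qed

lemma all_bc_zero: "(\<And>e. bc u e = 0) \<Longrightarrow> u = 0"
proof -
  assume h: "\<And>e. bc u e = 0"
  have "u = (\<Sum>e\<in>{e. hc (inv \<phi> u) e \<noteq> 0}. bc u e)" by (rule bc_sumD) (auto simp: hc_fin)
  then show ?thesis using h by simp
qed

lemma right_nd_F: assumes u: "u \<in> F d" and h: "\<forall>y\<in>F d. T (y * u) = 0" shows "u = 0"
proof (rule all_bc_zero)
  fix e
  show "bc u e = 0"
  proof (cases "d < e")
    case True then show ?thesis using F_hc[OF u] bc_zero by blast
  next
    case False
    show ?thesis
    proof (rule ccontr)
      assume nz: "bc u e \<noteq> 0"
      obtain v where v: "v \<in> \<phi> ` Ad e" "T (v * bc u e) \<noteq> 0" using blk_nd_right[OF bc_in nz] by blast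
      then obtain b where b: "b \<in> Ad e" "v = \<phi> b" by blast
      have "T (\<phi> b * u) = T (\<phi> b * bc u e)" by (rule T_mul_blk_left[OF b(1)])
      then have "T (v * u) = T (v * bc u e)" using b(2) by simp
      moreover have "v \<in> F d" using phi_F[OF b(1)] F_mono[of e d] False b(2) by auto
      ultimately show False using h v(2) by simp
    qed
  qed
qed

lemma left_nd_F: assumes x: "x \<in> F d" and h: "\<forall>y\<in>F d. T (x * y) = 0" shows "x = 0"
proof (rule all_bc_zero)
  fix e
  show "bc x e = 0"
  proof (cases "d < e")
    case True then show ?thesis using F_hc[OF x] bc_zero by blast
  next
    case False
    show ?thesis
    proof (rule ccontr)
      assume nz: "bc x e \<noteq> 0"
      obtain v where v: "v \<in> \<phi> ` Ad e" "T (bc x e * v) \<noteq> 0" using blk_nd_left[OF bc_in nz] by blast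
      then obtain b where b: "b \<in> Ad e" "v = \<phi> b" by blast
      have "T (x * \<phi> b) = T (bc x e * \<phi> b)" by (rule T_mul_blk_right[OF b(1)])
      then have "T (x * v) = T (bc x e * v)" using b(2) by simp
      moreover have "v \<in> F d" using phi_F[OF b(1)] F_mono[of e d] False b(2) by auto
      ultimately show False using h v(2) by simp
    qed
  qed
qed

lemma right_nd: "(\<And>y. T (y * u) = 0) \<Longrightarrow> u = 0"
  using F_all[of u] right_nd_F by blast
lemma left_nd: "(\<And>y. T (x * y) = 0) \<Longrightarrow> x = 0"
  using F_all[of x] left_nd_F by blast

lemma g_ex_F: assumes x: "x \<in> F d" shows "\<exists>z\<in>F d. \<forall>y. T (x * y) = T (y * z)"
proof -
  define zf where "zf e = (SOME w. w \<in> \<phi> ` Ad e \<and> (\<forall>v\<in>\<phi> ` Ad e. T (bc x e * v) = T (v * w)))" for e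
  have zf: "zf e \<in> \<phi> ` Ad e \<and> (\<forall>v\<in>\<phi> ` Ad e. T (bc x e * v) = T (v * zf e))" for e
  proof -
    have "\<exists>w\<in>\<phi> ` Ad e. \<forall>v\<in>\<phi> ` Ad e. T (bc x e * v) = T (v * w)"
      by (rule blk_repr_right) (simp_all add: b3 b4)
    then have "\<exists>w. w \<in> \<phi> ` Ad e \<and> (\<forall>v\<in>\<phi> ` Ad e. T (bc x e * v) = T (v * w))" by blast
    then show ?thesis unfolding zf_def by (rule someI_ex)
  qed
  define D where "D = {e. hc (inv \<phi> x) e \<noteq> 0}"
  have fin: "finite D" using hc_fin D_def by simp
  define z where "z = (\<Sum>e\<in>D. zf e)"
  have "z \<in> F d" unfolding z_def
  proof (rule B.subspace_sum[OF F_sub])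
    fix e assume "e \<in> D"
    then have "e \<le> d" using F_hc[OF x] D_def by (meson mem_Collect_eq not_le)
    moreover have "zf e \<in> F e" using zf[of e] phi_F by auto
    ultimately show "zf e \<in> F d" using F_mono by blast
  qed
  moreover have "T (x * y) = T (y * z)" for y
  proof -
    have xs: "x = (\<Sum>e\<in>D. bc x e)" by (rule bc_sumD[OF fin]) (simp add: D_def)
    have "T (x * y) = T ((\<Sum>e\<in>D. bc x e) * y)" using xs by (rule arg_cong[where f="\<lambda>t. T (t * y)"])
    also have "\<dots> = (\<Sum>e\<in>D. T (bc x e * y))" by (simp only: sum_distrib_right T_sum)
    finally have "T (x * y) = (\<Sum>e\<in>D. T (bc x e * y))" .
    also have "\<dots> = (\<Sum>e\<in>D. T (y * zf e))"
    proof (rule sum.cong[OF refl])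
      fix e
      have "T (bc x e * y) = T (bc x e * bc y e)"
        unfolding bc_def[of x] by (rule T_mul_blk_left[OF hc_in])
      also have "\<dots> = T (bc y e * zf e)" using zf[of e] bc_in by blast
      also have "\<dots> = T (y * zf e)"
      proof -
        obtain b where b: "b \<in> Ad e" "zf e = \<phi> b" using zf[of e] by blast
        have "T (y * \<phi> b) = T (bc y e * \<phi> b)" by (rule T_mul_blk_right[OF b(1)])
        then show ?thesis using b(2) by simp
      qed
      finally show "T (bc x e * y) = T (y * zf e)" .
    qed
    also have "\<dots> = T (y * z)" by (simp add: z_def sum_distrib_left T_sum)
    finally show ?thesis .
  qed
  ultimately show ?thesis by blast
qed

lemma g_ex_surj: "\<exists>x. \<forall>y. T (x * y) = T (y * z)"
proof -
  define xf where "xf e = (SOME u. u \<in> \<phi> ` Ad e \<and> (\<forall>v\<in>\<phi> ` Ad e. T (v * bc z e) = T (u * v)))" for e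
  have xf: "xf e \<in> \<phi> ` Ad e \<and> (\<forall>v\<in>\<phi> ` Ad e. T (v * bc z e) = T (xf e * v))" for e
  proof -
    have "\<exists>u\<in>\<phi> ` Ad e. \<forall>v\<in>\<phi> ` Ad e. T (v * bc z e) = T (u * v)"
      by (rule blk_repr_left) (simp_all add: b1 b2)
    then have "\<exists>u. u \<in> \<phi> ` Ad e \<and> (\<forall>v\<in>\<phi> ` Ad e. T (v * bc z e) = T (u * v))" by blast
    then show ?thesis unfolding xf_def by (rule someI_ex)
  qed
  define D where "D = {e. hc (inv \<phi> z) e \<noteq> 0}"
  have fin: "finite D" using hc_fin D_def by simp
  define x where "x = (\<Sum>e\<in>D. xf e)"
  have "T (x * y) = T (y * z)" for y
  proof -
    have zs: "z = (\<Sum>e\<in>D. bc z e)" by (rule bc_sumD[OF fin]) (simp add: D_def)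
    have "T (y * z) = T (y * (\<Sum>e\<in>D. bc z e))" using zs by (rule arg_cong[where f="\<lambda>t. T (y * t)"])
    also have "\<dots> = (\<Sum>e\<in>D. T (y * bc z e))" by (simp only: sum_distrib_left T_sum)
    finally have "T (y * z) = (\<Sum>e\<in>D. T (y * bc z e))" .
    also have "\<dots> = (\<Sum>e\<in>D. T (xf e * y))"
    proof (rule sum.cong[OF refl])
      fix e
      have "T (y * bc z e) = T (bc y e * bc z e)"
        unfolding bc_def[of z] by (rule T_mul_blk_right[OF hc_in])
      also have "\<dots> = T (xf e * bc y e)" using xf[of e] bc_in by blast
      also have "\<dots> = T (xf e * y)"
      proof -
        obtain b where b: "b \<in> Ad e" "xf e = \<phi> b" using xf[of e] by blast
        have "T (\<phi> b * y) = T (\<phi> b * bc y e)" by (rule T_mul_blk_left[OF b(1)])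
        then show ?thesis using b(2) by simp
      qed
      finally show "T (y * bc z e) = T (xf e * y)" .
    qed
    also have "\<dots> = T (x * y)" by (simp add: x_def sum_distrib_right T_sum)
    finally show ?thesis by simp
  qed
  then show ?thesis by blast
qed

end


definition gmap :: "(complex \<Rightarrow> 'a::comm_ring_1 \<Rightarrow> 'a) \<Rightarrow> (nat \<Rightarrow> 'a set) \<Rightarrow>
    (nat \<Rightarrow> 'a \<Rightarrow> 'a \<Rightarrow> 'a) \<times> ('a \<Rightarrow> 'b::ring_1) \<Rightarrow> 'b \<Rightarrow> 'b" where
  "gmap scA Ad P x = (SOME z. \<forall>y. trace_T scA Ad P (x * y) = trace_T scA Ad P (y * z))"

context qsetup begin

abbreviation g where "g \<equiv> gmap scA Ad (C, \<phi>)"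

lemma g_def': "g x = (SOME z. \<forall>y. T (x * y) = T (y * z))"
  by (simp add: gmap_def T_trace)

lemma g_spec: "T (x * y) = T (y * g x)"
proof -
  obtain d where "x \<in> F d" using F_all by blast
  then have "\<exists>z. \<forall>y. T (x * y) = T (y * z)" using g_ex_F by blast
  then have "\<forall>y. T (x * y) = T (y * g x)" unfolding g_def' by (rule someI_ex)
  then show ?thesis by blast
qed

lemma g_unique: assumes "\<And>y. T (x * y) = T (y * z)" shows "g x = z"
proof -
  have "T (y * (z - g x)) = 0" for y
    using assms[of y] g_spec[of x y] by (simp add: right_diff_distrib T_diff)
  then have "z - g x = 0" by (rule right_nd)
  then show ?thesis by simp
qed

lemma g_F: assumes "x \<in> F d" shows "g x \<in> F d"
proof -
  obtain z where "z \<in> F d" "\<forall>y. T (x * y) = T (y * z)" using g_ex_F[OF assms] by blast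
  then show ?thesis using g_unique by metis
qed

lemma g_add: "g (x + y) = g x + g y"
proof (rule g_unique)
  fix w
  show "T ((x + y) * w) = T (w * (g x + g y))"
    by (simp only: distrib_right distrib_left T_add g_spec[of x w] g_spec[of y w])
qed

lemma g_scale: "g (scB c x) = scB c (g x)"
proof (rule g_unique)
  fix w
  show "T (scB c x * w) = T (w * scB c (g x))"
    by (simp only: b2 b4 g_spec[of x w])
qed

lemma g_mult: "g (x * y) = g x * g y"
proof (rule g_unique)
  fix w
  have "T (x * y * w) = T (x * (y * w))" by (simp add: mult.assoc)
  also have "\<dots> = T (y * w * g x)" by (rule g_spec)
  also have "\<dots> = T (y * (w * g x))" by (simp add: mult.assoc)
  also have "\<dots> = T (w * g x * g y)" by (rule g_spec)
  finally show "T (x * y * w) = T (w * (g x * g y))" by (simp add: mult.assoc)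
qed

lemma g_one: "g 1 = 1"
  by (rule g_unique) simp

lemma g_inj: "inj g"
proof
  fix x x' assume "g x = g x'"
  then have "T ((x - x') * y) = 0" for y
    using g_spec[of x y] g_spec[of x' y] by (simp add: left_diff_distrib T_diff)
  then have "x - x' = 0" by (rule left_nd)
  then show "x = x'" by simp
qed

lemma g_surj: "surj g"
proof -
  have "z \<in> range g" for z
  proof -
    obtain x where "\<forall>y. T (x * y) = T (y * z)" using g_ex_surj by blast
    then have "g x = z" using g_unique by blast
    then show ?thesis by blast
  qed
  then show ?thesis by blast
qed

lemma s_zero: "s 0 = 0" using s_add[of 0 0] by simp
lemma s_sum: "s (\<Sum>i\<in>I. f i) = (\<Sum>i\<in>I. s (f i))"
  by (induction I rule: infinite_finite_induct) (auto simp: s_zero s_add)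

lemma T_s_phi: assumes a: "a \<in> Ad d" shows "T (s (\<phi> a)) = T (\<phi> a)"
proof (cases "d = 0")
  case True then show ?thesis using phi_s[OF a] by simp
next
  case False
  then have "CT scA Ad a = 0" using CT_hom[OF a] by simp
  then show ?thesis using phi_s[OF a] by (simp add: T_scale T_phi)
qed

lemma T_s: "T (s x) = T x"
proof -
  let ?D = "{e. hc (inv \<phi> x) e \<noteq> 0}"
  have xs: "x = (\<Sum>e\<in>?D. bc x e)" by (rule bc_sumD) (auto simp: hc_fin)
  have "T (s x) = T (s (\<Sum>e\<in>?D. bc x e))" using xs by (rule arg_cong[where f="\<lambda>t. T (s t)"])
  also have "\<dots> = (\<Sum>e\<in>?D. T (s (bc x e)))" by (simp add: s_sum T_sum)
  also have "\<dots> = (\<Sum>e\<in>?D. T (bc x e))" by (simp add: bc_def T_s_phi[OF hc_in])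
  also have "\<dots> = T (\<Sum>e\<in>?D. bc x e)" by (simp add: T_sum)
  also have "\<dots> = T x" by (rule arg_cong[where f=T, OF xs[symmetric]])
  finally show ?thesis .
qed

lemma g_s: "g (s x) = s (g x)"
proof (rule g_unique)
  fix y
  have "T (s x * y) = T (s (s x * y))" by (simp add: T_s)
  also have "\<dots> = T (x * s y)" by (simp add: s_mult s_s)
  also have "\<dots> = T (s y * g x)" by (rule g_spec)
  also have "\<dots> = T (s (s y * g x))" by (simp add: T_s)
  also have "\<dots> = T (y * s (g x))" by (simp add: s_mult s_s)
  finally show "T (s x * y) = T (y * s (g x))" .
qed

lemma g_aut: "g \<in> filt_aut scB F s"
  unfolding filt_aut_def
  using g_inj g_surj g_add g_scale g_mult g_one g_F g_s
  by (auto simp: bij_def fun_eq_iff)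

lemma g_unique_aut: "h \<in> filt_aut scB F s \<Longrightarrow> (\<forall>x y. T (x * y) = T (y * h x)) \<Longrightarrow> h = g"
  by (rule ext, rule sym, rule g_unique) blast

lemma T_vanish_span: "x \<in> B.span {a * b - b * g a | a b. True} \<Longrightarrow> T x = 0"
proof -
  assume x: "x \<in> B.span {a * b - b * g a | a b. True}"
  have "B.span {a * b - b * g a | a b. True} \<subseteq> {x. T x = 0}"
  proof (rule B.span_minimal)
    show "{a * b - b * g a | a b. True} \<subseteq> {x. T x = 0}"
    proof
      fix x assume "x \<in> {a * b - b * g a | a b. True}"
      then obtain a b where "x = a * b - b * g a" by blast
      then show "x \<in> {x. T x = 0}" using g_spec[of a b] by (simp add: T_diff)
    qed
    show "B.subspace {x. T x = 0}"
      unfolding B.subspace_def by (auto simp: T_add T_scale)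
  qed
  then show ?thesis using x by auto
qed

lemma restr_in: "restrict_s s T \<in> hh0_s_dual scB s g"
  unfolding hh0_s_dual_def restrict_s_def
  using T_vanish_span by (auto simp: T_add T_scale s_add s_scale)

lemma T_restr: "T x = restrict_s s T (scB (1/2) (x + s x))"
proof -
  let ?y = "scB (1/2) (x + s x)"
  have "s ?y = ?y" by (simp add: s_scale s_add s_s add.commute)
  moreover have "T ?y = T x" by (simp add: T_scale T_add T_s)
  ultimately show ?thesis by (simp add: restrict_s_def)
qed

lemma phi_orth: assumes a: "a \<in> Ad d" and d: "0 < d" and y: "y \<in> F (d - 1)"
  shows "T (y * \<phi> a) = 0"
proof -
  have "T (y * \<phi> a) = T (bc y d * \<phi> a)" by (rule T_mul_blk_right[OF a])
  moreover have "bc y d = 0" using F_hc[OF y] d by (simp add: bc_zero)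
  ultimately show ?thesis by simp
qed

lemma phi_char:
  assumes a: "a \<in> Ad d" and z: "z \<in> F d" "smb d z = a"
    and orth: "0 < d \<Longrightarrow> \<forall>y\<in>F (d - 1). T (y * z) = 0"
  shows "z = \<phi> a"
proof -
  have u: "z - \<phi> a \<in> F d" using F_diff z(1) phi_F[OF a] by blast
  have sm: "smb d (z - \<phi> a) = 0" using smb_diff[OF z(1) phi_F[OF a]] z(2) phi_smb[OF a] by simp
  show ?thesis
  proof (cases "d = 0")
    case True
    then show ?thesis using smb_ker[OF u] sm by simp
  next
    case False
    then have u': "z - \<phi> a \<in> F (d - 1)" using smb_ker[OF u] sm by simp
    have "\<forall>y\<in>F (d - 1). T (y * (z - \<phi> a)) = 0"
      using orth phi_orth[OF a] False by (simp add: right_diff_distrib T_diff)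
    then have "z - \<phi> a = 0" by (rule right_nd_F[OF u'])
    then show ?thesis by simp
  qed
qed

lemma phi_decomp: "\<phi> x = (\<Sum>e\<in>{e. hc x e \<noteq> 0}. \<phi> (hc x e))"
proof -
  have "x = (\<Sum>e\<in>{e. hc x e \<noteq> 0}. hc x e)" by (rule hc_sumD) (auto simp: hc_fin)
  then have "\<phi> x = \<phi> (\<Sum>e\<in>{e. hc x e \<noteq> 0}. hc x e)" by (rule arg_cong)
  then show ?thesis by (simp add: phi_sum)
qed

lemma C_zero1: "C k 0 b = 0" using C_add1[of k 0 0 b] by simp
lemma C_zero2: "C k a 0 = 0" using C_add2[of k a 0 0] by simp
lemma C_sum1: "C k (\<Sum>i\<in>I. f i) b = (\<Sum>i\<in>I. C k (f i) b)"
  by (induction I rule: infinite_finite_induct) (auto simp: C_zero1 C_add1)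
lemma C_sum2: "C k a (\<Sum>i\<in>I. f i) = (\<Sum>i\<in>I. C k a (f i))"
  by (induction I rule: infinite_finite_induct) (auto simp: C_zero2 C_add2)

lemma C_hom: assumes a: "a \<in> Ad i" and b: "b \<in> Ad j"
  shows "C k a b = (if 2 * k \<le> i + j then hc (star_of C a b) (i + j - 2 * k) else 0)"
proof (cases "2 * k \<le> i + j")
  case False
  then show ?thesis using C_grade[OF a b, of k] by simp
next
  case True
  let ?K = "{k'. C k' a b \<noteq> 0}"
  have "hc (star_of C a b) (i + j - 2 * k) = (\<Sum>k'\<in>?K. hc (C k' a b) (i + j - 2 * k))"
    by (simp add: star_of_def hc_sum)
  also have "\<dots> = (\<Sum>k'\<in>?K. if k' = k then C k' a b else 0)"
  proof (rule sum.cong[OF refl])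
    fix k' assume "k' \<in> ?K"
    then have nz: "C k' a b \<noteq> 0" by simp
    then have k': "2 * k' \<le> i + j" using C_grade[OF a b, of k'] by (auto split: if_splits)
    then have "C k' a b \<in> Ad (i + j - 2 * k')" using C_grade[OF a b, of k'] by simp
    then have "hc (C k' a b) = (\<lambda>d. if d = i + j - 2 * k' then C k' a b else 0)" by (rule hc_hom)
    moreover have "(i + j - 2 * k = i + j - 2 * k') \<longleftrightarrow> k' = k" using k' True by auto
    ultimately show "hc (C k' a b) (i + j - 2 * k) = (if k' = k then C k' a b else 0)" by auto
  qed
  also have "\<dots> = C k a b"
  proof -
    have "finite ?K" using star_fin[OF a b] finite_subset by blast
    then show ?thesis by (auto simp: sum.delta)
  qed
  finally show ?thesis using True by simp
qed

lemma C_star: "C k a b = (\<Sum>i\<in>{i. hc a i \<noteq> 0}. \<Sum>j\<in>{j. hc b j \<noteq> 0}.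
    (if 2 * k \<le> i + j then hc (star_of C (hc a i) (hc b j)) (i + j - 2 * k) else 0))"
proof -
  have a: "a = (\<Sum>i\<in>{i. hc a i \<noteq> 0}. hc a i)" by (rule hc_sumD) (auto simp: hc_fin)
  have b: "b = (\<Sum>j\<in>{j. hc b j \<noteq> 0}. hc b j)" by (rule hc_sumD) (auto simp: hc_fin)
  have "C k a b = C k (\<Sum>i\<in>{i. hc a i \<noteq> 0}. hc a i) (\<Sum>j\<in>{j. hc b j \<noteq> 0}. hc b j)"
    by (rule arg_cong2[where f="C k", OF a b])
  also have "\<dots> = (\<Sum>i\<in>{i. hc a i \<noteq> 0}. \<Sum>j\<in>{j. hc b j \<noteq> 0}. C k (hc a i) (hc b j))"
    by (subst C_sum1) (simp only: C_sum2)
  also have "\<dots> = (\<Sum>i\<in>{i. hc a i \<noteq> 0}. \<Sum>j\<in>{j. hc b j \<noteq> 0}.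
    (if 2 * k \<le> i + j then hc (star_of C (hc a i) (hc b j)) (i + j - 2 * k) else 0))"
    by (intro sum.cong refl C_hom hc_in)
  finally show ?thesis .
qed

end


lemma qsetupI:
  assumes "graded_poisson_alg scA Ad pb" "filtered_quantization scA Ad pb scB F smb s"
    "(C, \<phi>) \<in> nd_short_star_products scA Ad pb scB F smb s"
  shows "qsetup scA Ad pb scB F smb s C \<phi>"
  using assms by (simp add: qsetup_def qsetup_axioms_def gr_def)

theorem corollary3p5:
  fixes scA :: "complex \<Rightarrow> 'a::comm_ring_1 \<Rightarrow> 'a" and Ad :: "nat \<Rightarrow> 'a set"
    and pb :: "'a \<Rightarrow> 'a \<Rightarrow> 'a"
    and scB :: "complex \<Rightarrow> 'b::ring_1 \<Rightarrow> 'b" and F :: "nat \<Rightarrow> 'b set"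
    and smb :: "nat \<Rightarrow> 'b \<Rightarrow> 'a" and s :: "'b \<Rightarrow> 'b"
  assumes "graded_poisson_alg scA Ad pb"
    and "filtered_quantization scA Ad pb scB F smb s"
  defines "S \<equiv> nd_short_star_products scA Ad pb scB F smb s"
  shows "\<exists>\<pi>. (\<forall>P\<in>S. \<pi> P \<in> filt_aut scB F s \<and>
                 (\<forall>x y. trace_T scA Ad P (x * y) = trace_T scA Ad P (y * \<pi> P x)) \<and>
                 (\<forall>h\<in>filt_aut scB F s.
                    (\<forall>x y. trace_T scA Ad P (x * y) = trace_T scA Ad P (y * h x)) \<longrightarrow> h = \<pi> P)) \<and>
             (\<forall>g. inj_on (\<lambda>P. restrict_s s (trace_T scA Ad P)) {P\<in>S. \<pi> P = g} \<and>
                  (\<lambda>P. restrict_s s (trace_T scA Ad P)) ` {P\<in>S. \<pi> P = g} \<subseteq> hh0_s_dual scB s g)"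
proof (rule exI[of _ "gmap scA Ad"], rule conjI)
  show "\<forall>P\<in>S. gmap scA Ad P \<in> filt_aut scB F s \<and>
                 (\<forall>x y. trace_T scA Ad P (x * y) = trace_T scA Ad P (y * gmap scA Ad P x)) \<and>
                 (\<forall>h\<in>filt_aut scB F s.
                    (\<forall>x y. trace_T scA Ad P (x * y) = trace_T scA Ad P (y * h x)) \<longrightarrow> h = gmap scA Ad P)"
  proof
    fix P assume P: "P \<in> S"
    obtain C \<phi> where Pe: "P = (C, \<phi>)" by fastforce
    interpret Q: qsetup scA Ad pb scB F smb s C \<phi>
      using assms P Pe by (intro qsetupI) auto
    have 1: "gmap scA Ad P \<in> filt_aut scB F s" using Q.g_aut Pe by simp
    have 2: "\<forall>x y. trace_T scA Ad P (x * y) = trace_T scA Ad P (y * gmap scA Ad P x)"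
      using Q.g_spec Pe Q.T_trace by simp
    have 3: "\<forall>h\<in>filt_aut scB F s.
          (\<forall>x y. trace_T scA Ad P (x * y) = trace_T scA Ad P (y * h x)) \<longrightarrow> h = gmap scA Ad P"
      using Q.g_unique_aut Pe Q.T_trace by simp
    show "gmap scA Ad P \<in> filt_aut scB F s \<and>
                 (\<forall>x y. trace_T scA Ad P (x * y) = trace_T scA Ad P (y * gmap scA Ad P x)) \<and>
                 (\<forall>h\<in>filt_aut scB F s.
                    (\<forall>x y. trace_T scA Ad P (x * y) = trace_T scA Ad P (y * h x)) \<longrightarrow> h = gmap scA Ad P)"
      using 1 2 3 by blast
  qed
next
  show "\<forall>g. inj_on (\<lambda>P. restrict_s s (trace_T scA Ad P)) {P\<in>S. gmap scA Ad P = g} \<and>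
                  (\<lambda>P. restrict_s s (trace_T scA Ad P)) ` {P\<in>S. gmap scA Ad P = g} \<subseteq> hh0_s_dual scB s g"
  proof (intro allI conjI)
  fix g
  show "(\<lambda>P. restrict_s s (trace_T scA Ad P)) ` {P\<in>S. gmap scA Ad P = g} \<subseteq> hh0_s_dual scB s g"
  proof
    fix f assume "f \<in> (\<lambda>P. restrict_s s (trace_T scA Ad P)) ` {P\<in>S. gmap scA Ad P = g}"
    then obtain P where P: "P \<in> S" "gmap scA Ad P = g" "f = restrict_s s (trace_T scA Ad P)" by blast
    obtain C \<phi> where Pe: "P = (C, \<phi>)" by fastforce
    interpret Q: qsetup scA Ad pb scB F smb s C \<phi>
      using assms P Pe by (intro qsetupI) auto
    show "f \<in> hh0_s_dual scB s g" using Q.restr_in P Pe Q.T_trace by simp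
  qed
  show "inj_on (\<lambda>P. restrict_s s (trace_T scA Ad P)) {P\<in>S. gmap scA Ad P = g}"
  proof
    fix P1 P2 assume P1: "P1 \<in> {P\<in>S. gmap scA Ad P = g}" and P2: "P2 \<in> {P\<in>S. gmap scA Ad P = g}"
      and eq: "restrict_s s (trace_T scA Ad P1) = restrict_s s (trace_T scA Ad P2)"
    obtain C1 \<phi>1 where P1e: "P1 = (C1, \<phi>1)" by fastforce
    obtain C2 \<phi>2 where P2e: "P2 = (C2, \<phi>2)" by fastforce
    interpret Q1: qsetup scA Ad pb scB F smb s C1 \<phi>1
      using assms P1 P1e by (intro qsetupI) auto
    interpret Q2: qsetup scA Ad pb scB F smb s C2 \<phi>2
      using assms P2 P2e by (intro qsetupI) auto
    have eqT: "restrict_s s Q1.T = restrict_s s Q2.T" using eq P1e P2e Q1.T_trace Q2.T_trace by simp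
    have TT: "Q1.T x = Q2.T x" for x
      using Q1.T_restr[of x] Q2.T_restr[of x] eqT by simp
    have phihom: "\<phi>1 a = \<phi>2 a" if a: "a \<in> Ad d" for a d
    proof -
      have "\<phi>2 a = \<phi>1 a"
      proof (rule Q1.phi_char[OF a])
        show "\<phi>2 a \<in> F d" by (rule Q2.phi_F[OF a])
        show "smb d (\<phi>2 a) = a" by (rule Q2.phi_smb[OF a])
        show "\<forall>y\<in>F (d - 1). Q1.T (y * \<phi>2 a) = 0" if "0 < d"
          using Q2.phi_orth[OF a that] TT by simp
      qed
      then show ?thesis by simp
    qed
    have phieq: "\<phi>1 = \<phi>2"
    proof
      fix x
      show "\<phi>1 x = \<phi>2 x"
      proof -
        have "(\<Sum>e\<in>{e. Q1.hc x e \<noteq> 0}. \<phi>1 (Q1.hc x e)) = (\<Sum>e\<in>{e. Q1.hc x e \<noteq> 0}. \<phi>2 (Q1.hc x e))"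
          by (rule sum.cong[OF refl], rule phihom, rule Q1.hc_in)
        then show ?thesis using Q1.phi_decomp[of x] Q2.phi_decomp[of x] by simp
      qed
    qed
    have stareq: "star_of C1 a b = star_of C2 a b" for a b
    proof -
      have "\<phi>1 (star_of C1 a b) = \<phi>1 (star_of C2 a b)"
        using Q1.phi_star[of a b] Q2.phi_star[of a b] phieq by simp
      then show ?thesis by (rule Q1.phi_inj)
    qed
    have "C1 = C2"
    proof (intro ext)
      fix k a b
      show "C1 k a b = C2 k a b"
      proof -
        have sc: "star_of C1 = star_of C2" using stareq by (intro ext)
        show ?thesis by (subst Q1.C_star, subst Q2.C_star, simp only: sc)
      qed
    qed
    then show "P1 = P2" using phieq P1e P2e by simp
  qed
  qed
qed


end
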